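(* Let $G$ be a tree on vertex set $[n]$ and let $\mathrm{CIM}_G=\operatorname{conv}\left(c_\mathcal{G}\colon \mathcal{G}\text{ a DAG on }[n]\text{ with skeleton } G\right)$. Then $\operatorname{diam}(\mathrm{CIM}_G)$ is less than or equal to the number of internal vertices (non-leaf vertices) of $G$.
   Context: For a directed acyclic graph (DAG) $\mathcal{G}$ on vertex set $[n]=\{1,\dots,n\}$, the characteristic imset $c_\mathcal{G}$ is the 0/1-vector indexed by the subsets $S\subseteq[n]$ with $|S|\geq 2$, with $c_\mathcal{G}(S)=1$ if there exists $i\in S$ such that $S\subseteq \mathrm{pa}_\mathcal{G}(i)\cup\{i\}$ (where $\mathrm{pa}_\mathcal{G}(i)$ is the set of parents of $i$), and $c_\mathcal{G}(S)=0$ otherwise. The skeleton of a DAG is the undirected graph with the same vertices and adjacencies. For a polytope $P$, the vertex-edge graph $G(P)$ has the vertices of $P$ as nodes, with two vertices adjacent iff their convex hull is an edge of $P$; $\operatorname{diam}(P)$ is the maximum over pairs of vertices of the length of a shortest path between them in $G(P)$. *)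

theory Defs
  imports "HOL-Analysis.Analysis" "HOL-Library.Extended_Nat"
begin

text \<open>Vertex set [n] is represented by a finite type 'n with n = CARD('n).
  Undirected graphs are sets of 2-element vertex sets; DAGs are edge relations.\<close>

definition is_dag :: "('n \<times> 'n) set \<Rightarrow> bool" where
  "is_dag D \<longleftrightarrow> acyclic D"

definition parents :: "('n \<times> 'n) set \<Rightarrow> 'n \<Rightarrow> 'n set" where
  "parents D i = {j. (j, i) \<in> D}"

definition skeleton :: "('n \<times> 'n) set \<Rightarrow> 'n set set" where
  "skeleton D = {{i, j} | i j. (i, j) \<in> D}"

text \<open>Coordinates are indexed by all subsets of the vertex set;
  the coordinates with |S| < 2 are identically 0 (a fixed linear embedding of the
  paper's space indexed by subsets S with |S| >= 2).\<close>
definition char_imset :: "('n::finite \<times> 'n) set \<Rightarrow> real ^ ('n set)" where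
  "char_imset D = (\<chi> S. if 2 \<le> card S \<and> (\<exists>i\<in>S. S \<subseteq> parents D i \<union> {i}) then 1 else 0)"

definition adj :: "'n set set \<Rightarrow> 'n \<Rightarrow> 'n \<Rightarrow> bool" where
  "adj G u v \<longleftrightarrow> {u, v} \<in> G"

definition is_simple_graph :: "'n set set \<Rightarrow> bool" where
  "is_simple_graph G \<longleftrightarrow> (\<forall>e\<in>G. card e = 2)"

definition graph_connected :: "'n set set \<Rightarrow> bool" where
  "graph_connected G \<longleftrightarrow> (\<forall>u v. (u, v) \<in> {(x, y). adj G x y}\<^sup>*)"

definition has_cycle :: "'n set set \<Rightarrow> bool" where
  "has_cycle G \<longleftrightarrow> (\<exists>vs. length vs \<ge> 3 \<and> distinct vs \<and>
      (\<forall>i. Suc i < length vs \<longrightarrow> adj G (vs ! i) (vs ! Suc i)) \<and> adj G (last vs) (hd vs))"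

definition is_tree :: "'n set set \<Rightarrow> bool" where
  "is_tree G \<longleftrightarrow> is_simple_graph G \<and> graph_connected G \<and> \<not> has_cycle G"

definition degree :: "'n set set \<Rightarrow> 'n \<Rightarrow> nat" where
  "degree G v = card {e \<in> G. v \<in> e}"

definition internal_vertices :: "'n set set \<Rightarrow> 'n set" where
  "internal_vertices G = {v. degree G v \<noteq> 1}"

definition CIM :: "('n::finite) set set \<Rightarrow> (real ^ ('n set)) set" where
  "CIM G = convex hull {char_imset D | D. is_dag D \<and> skeleton D = G}"

definition poly_vertices :: "'a::real_vector set \<Rightarrow> 'a set" where
  "poly_vertices P = {x. x extreme_point_of P}"

definition poly_edge :: "'a::real_vector set \<Rightarrow> 'a \<Rightarrow> 'a \<Rightarrow> bool" where
  "poly_edge P u v \<longleftrightarrow> u \<in> poly_vertices P \<and> v \<in> poly_vertices P \<and> u \<noteq> v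
      \<and> convex hull {u, v} face_of P"

definition poly_walk :: "'a::real_vector set \<Rightarrow> 'a \<Rightarrow> 'a \<Rightarrow> nat \<Rightarrow> bool" where
  "poly_walk P u v k \<longleftrightarrow> (\<exists>xs. length xs = Suc k \<and> hd xs = u \<and> last xs = v \<and>
      (\<forall>i<k. poly_edge P (xs ! i) (xs ! Suc i)))"

definition poly_dist :: "'a::real_vector set \<Rightarrow> 'a \<Rightarrow> 'a \<Rightarrow> enat" where
  "poly_dist P u v = (if \<exists>k. poly_walk P u v k then enat (LEAST k. poly_walk P u v k) else \<infinity>)"

definition poly_diam :: "'a::real_vector set \<Rightarrow> enat" where
  "poly_diam P = Sup {poly_dist P u v | u v. u \<in> poly_vertices P \<and> v \<in> poly_vertices P}"

end

theory Submission
  imports Defs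
begin

definition nbrs :: "'n set set \<Rightarrow> 'n \<Rightarrow> 'n set" where
  "nbrs G x = {j. {x, j} \<in> G}"

definition lab :: "('n \<times> 'n) set \<Rightarrow> 'n \<Rightarrow> 'n set" where
  "lab D x = (if 2 \<le> card (parents D x) then parents D x else {})"

definition mob :: "'n::finite set set \<Rightarrow> 'n \<Rightarrow> 'n set \<Rightarrow> real ^ ('n set)" where
  "mob G x Q = ((-1) ^ card Q) *\<^sub>R (\<Sum>R\<in>{R. Q \<subseteq> R \<and> R \<subseteq> nbrs G x}. ((-1) ^ card R) *\<^sub>R axis (insert x R) 1)"

definition Lsets :: "'n set set \<Rightarrow> 'n \<Rightarrow> 'n set set" where
  "Lsets G x = {Q. Q \<subseteq> nbrs G x \<and> 2 \<le> card Q}"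

definition fvec :: "'n::finite set set \<Rightarrow> ('n \<Rightarrow> 'n set \<Rightarrow> real) \<Rightarrow> real ^ ('n set)" where
  "fvec G F = (\<Sum>x\<in>UNIV. \<Sum>Q\<in>Lsets G x. (F x Q - F x {}) *\<^sub>R mob G x Q)"

lemma alt_sum:
  assumes "finite A" "Q \<subseteq> A"
  shows "(\<Sum>R\<in>{R. Q \<subseteq> R \<and> R \<subseteq> A}. (-1::real) ^ card R) = (if A = Q then (-1) ^ card Q else 0)"
proof (cases "A = Q")
  case True
  then have "{R. Q \<subseteq> R \<and> R \<subseteq> A} = {Q}" by auto
  then show ?thesis using True by simp
next
  case False
  then have "Q \<subset> A" using assms by auto
  have "(\<Sum>R\<in>{R. R \<subseteq> A \<and> Q \<subseteq> R}. (-1::real) ^ card R) = 0"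
    apply (rule sum_alternating_cancels)
    using assms(1) apply simp
    using card_subsupersets_even_odd[OF assms(1) \<open>Q \<subset> A\<close>]
    by (simp add: conj_commute conj_left_commute)
  then show ?thesis using False by (simp add: conj_commute)
qed

lemma tree_simple: "is_tree G \<Longrightarrow> e \<in> G \<Longrightarrow> card e = 2"
  by (simp add: is_tree_def is_simple_graph_def)

lemma tree_no_triangle:
  assumes "is_tree G" "{a, b} \<in> G" "{b, c} \<in> G" "{c, a} \<in> G" "a \<noteq> b" "b \<noteq> c" "a \<noteq> c"
  shows False
proof -
  have "has_cycle G"
    unfolding has_cycle_def
    apply (rule exI[of _ "[a, b, c]"])
    using assms by (auto simp: adj_def less_Suc_eq nth_Cons')
  then show False using assms(1) by (simp add: is_tree_def)
qed

lemma parents_nbrs: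
  assumes "skeleton D = G" shows "parents D x \<subseteq> nbrs G x"
  using assms by (auto simp: parents_def nbrs_def skeleton_def insert_commute)

lemma not_self_nbr:
  assumes "is_tree G" shows "x \<notin> nbrs G x"
  using tree_simple[OF assms, of "{x}"] by (auto simp: nbrs_def)

lemma block:
  fixes D :: "('n::finite \<times> 'n) set"
  assumes T: "is_tree G" and S: "skeleton D = G" and R: "R \<subseteq> nbrs G x" "2 \<le> card R"
  shows "char_imset D $ insert x R = (if R \<subseteq> parents D x then 1 else 0)"
proof -
  have xR: "x \<notin> R" using R not_self_nbr[OF T] by auto
  have c: "2 \<le> card (insert x R)"
    using R(2) xR by (simp add: card_insert_if)
  have "(\<exists>i\<in>insert x R. insert x R \<subseteq> parents D i \<union> {i}) \<longleftrightarrow> R \<subseteq> parents D x"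
  proof
    assume "\<exists>i\<in>insert x R. insert x R \<subseteq> parents D i \<union> {i}"
    then obtain i where i: "i \<in> insert x R" "insert x R \<subseteq> parents D i \<union> {i}" by blast
    show "R \<subseteq> parents D x"
    proof (cases "i = x")
      case True then show ?thesis using i xR by auto
    next
      case False
      then have iR: "i \<in> R" using i by auto
      obtain r where r: "r \<in> R" "r \<noteq> i"
      proof -
        have "R - {i} \<noteq> {}"
        proof
          assume "R - {i} = {}"
          then have "R \<subseteq> {i}" by blast
          then have "card R \<le> 1" using card_mono[of "{i}" R] by simp
          then show False using R(2) by simp
        qed
        then show ?thesis using that by blast
      qed
      have "x \<in> parents D i" "r \<in> parents D i" using i False r xR by auto
      then have e1: "{x, i} \<in> G" and e2: "{r, i} \<in> G"
        using S by (auto simp: parents_def skeleton_def)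
      have e3: "{x, r} \<in> G" using R r by (auto simp: nbrs_def)
      show ?thesis
        using tree_no_triangle[OF T, of x i r] e1 e2 e3 r xR iR
        by (metis insert_commute)
    qed
  next
    assume "R \<subseteq> parents D x" then show "\<exists>i\<in>insert x R. insert x R \<subseteq> parents D i \<union> {i}"
      by auto
  qed
  then show ?thesis using c by (simp add: char_imset_def)
qed

lemma mob_inner:
  fixes D :: "('n::finite \<times> 'n) set"
  assumes T: "is_tree G" and S: "skeleton D = G" and Q: "Q \<in> Lsets G x"
  shows "mob G x Q \<bullet> char_imset D = (if parents D x = Q then 1 else 0)"
proof -
  let ?Rs = "{R. Q \<subseteq> R \<and> R \<subseteq> nbrs G x}"
  let ?p = "parents D x"
  have pn: "?p \<subseteq> nbrs G x" by (rule parents_nbrs[OF S])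
  have "mob G x Q \<bullet> char_imset D
      = (-1) ^ card Q * (\<Sum>R\<in>?Rs. (-1) ^ card R * (char_imset D $ insert x R))"
    by (simp add: mob_def inner_sum_left inner_axis')
  also have "(\<Sum>R\<in>?Rs. (-1) ^ card R * (char_imset D $ insert x R))
      = (\<Sum>R\<in>?Rs. if R \<subseteq> ?p then (-1) ^ card R else 0)"
  proof (rule sum.cong[OF refl])
    fix R assume R: "R \<in> ?Rs"
    then have "card Q \<le> card R" by (intro card_mono) auto
    then have "2 \<le> card R" using Q by (auto simp: Lsets_def)
    then show "(-1) ^ card R * (char_imset D $ insert x R) = (if R \<subseteq> ?p then (-1) ^ card R else 0)"
      using block[OF T S _ \<open>2 \<le> card R\<close>, of x] R by auto
  qed
  also have "\<dots> = (\<Sum>R\<in>{R \<in> ?Rs. R \<subseteq> ?p}. (-1::real) ^ card R)"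
    using sum.inter_filter[of ?Rs "\<lambda>R. (-1::real)^card R" "\<lambda>R. R \<subseteq> ?p"] by simp
  also have "{R \<in> ?Rs. R \<subseteq> ?p} = {R. Q \<subseteq> R \<and> R \<subseteq> ?p}"
    using pn by auto
  finally have eq: "mob G x Q \<bullet> char_imset D = (-1) ^ card Q * (\<Sum>R\<in>{R. Q \<subseteq> R \<and> R \<subseteq> ?p}. (-1::real) ^ card R)" .
  show ?thesis
  proof (cases "Q \<subseteq> ?p")
    case True
    show ?thesis unfolding eq alt_sum[OF finite True]
      by (auto simp flip: power_add simp: mult_2[symmetric])
  next
    case False
    then have e: "{R. Q \<subseteq> R \<and> R \<subseteq> ?p} = {}" by auto
    show ?thesis unfolding eq e using False by auto
  qed
qed

lemma fvec_inner:
  fixes D :: "('n::finite \<times> 'n) set"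
  assumes T: "is_tree G" and S: "skeleton D = G"
  shows "fvec G F \<bullet> char_imset D = (\<Sum>x\<in>UNIV. F x (lab D x) - F x {})"
proof -
  have "fvec G F \<bullet> char_imset D = (\<Sum>x\<in>UNIV. \<Sum>Q\<in>Lsets G x. (F x Q - F x {}) * (if parents D x = Q then 1 else 0))"
    unfolding fvec_def inner_sum_left inner_scaleR_left
    by (intro sum.cong refl, simp add: mob_inner[OF T S])
  also have "\<dots> = (\<Sum>x\<in>UNIV. F x (lab D x) - F x {})"
  proof (rule sum.cong[OF refl])
    fix x
    show "(\<Sum>Q\<in>Lsets G x. (F x Q - F x {}) * (if parents D x = Q then 1 else 0)) = F x (lab D x) - F x {}"
    proof (cases "2 \<le> card (parents D x)")
      case True
      then have "parents D x \<in> Lsets G x" using parents_nbrs[OF S] by (auto simp: Lsets_def)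
      then show ?thesis using True
        by (simp add: lab_def mult.commute[of _ "if _ then _ else _"] if_distrib sum.delta' cong: if_cong)
    next
      case False
      then have "\<And>Q. Q \<in> Lsets G x \<Longrightarrow> parents D x \<noteq> Q" by (auto simp: Lsets_def)
      then show ?thesis using False by (simp add: lab_def)
    qed
  qed
  finally show ?thesis .
qed

lemma cond_iff:
  fixes D :: "('n::finite \<times> 'n) set"
  assumes "2 \<le> card S"
  shows "(\<exists>i\<in>S. S \<subseteq> parents D i \<union> {i}) \<longleftrightarrow> ((\<exists>i\<in>S. S \<subseteq> lab D i \<union> {i}) \<or> S \<in> skeleton D)"
proof
  assume "\<exists>i\<in>S. S \<subseteq> parents D i \<union> {i}"
  then obtain i where i: "i \<in> S" "S \<subseteq> parents D i \<union> {i}" by blast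
  show "(\<exists>i\<in>S. S \<subseteq> lab D i \<union> {i}) \<or> S \<in> skeleton D"
  proof (cases "2 \<le> card (parents D i)")
    case True
    then show ?thesis using i by (auto simp: lab_def)
  next
    case False
    have "S - {i} \<noteq> {}"
    proof
      assume "S - {i} = {}"
      then have "S \<subseteq> {i}" by blast
      then have "card S \<le> 1" using card_mono[of "{i}" S] by simp
      then show False using assms by simp
    qed
    then obtain j where j: "j \<in> S" "j \<noteq> i" by blast
    then have jp: "j \<in> parents D i" using i by auto
    have "parents D i = {j}"
    proof -
      have "card (parents D i) \<le> 1" using False by simp
      have "k = j" if "k \<in> parents D i" for k
      proof (rule ccontr)
        assume "k \<noteq> j"
        then have "card {j, k} = 2" by simp
        moreover have "card {j, k} \<le> card (parents D i)" using that jp by (intro card_mono) auto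
        ultimately show False using \<open>card (parents D i) \<le> 1\<close> by simp
      qed
      then show ?thesis using jp by blast
    qed
    then have "S = {j, i}" using i j by auto
    moreover have "(j, i) \<in> D" using jp by (simp add: parents_def)
    ultimately show ?thesis by (auto simp: skeleton_def)
  qed
next
  assume "(\<exists>i\<in>S. S \<subseteq> lab D i \<union> {i}) \<or> S \<in> skeleton D"
  then show "\<exists>i\<in>S. S \<subseteq> parents D i \<union> {i}"
  proof
    assume "\<exists>i\<in>S. S \<subseteq> lab D i \<union> {i}"
    then show ?thesis by (auto simp: lab_def split: if_splits)
  next
    assume "S \<in> skeleton D"
    then obtain a b where "S = {a, b}" "(a, b) \<in> D" by (auto simp: skeleton_def)
    then show ?thesis by (auto simp: parents_def)
  qed
qed

lemma lab_char:
  fixes D E :: "('n::finite \<times> 'n) set"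
  assumes "skeleton D = skeleton E" "lab D = lab E"
  shows "char_imset D = char_imset E"
  unfolding char_imset_def vec_eq_iff
proof
  fix S :: "'n set"
  show "(\<chi> S. if 2 \<le> card S \<and> (\<exists>i\<in>S. S \<subseteq> parents D i \<union> {i}) then 1 else 0) $ S =
        (\<chi> S. if 2 \<le> card S \<and> (\<exists>i\<in>S. S \<subseteq> parents E i \<union> {i}) then 1 else 0) $ S"
    using cond_iff[of S D] cond_iff[of S E] assms by auto
qed

lemma face_pair:
  fixes V :: "(real ^ 'm) set"
  assumes fin: "finite V" and uv: "u \<in> V" "v \<in> V" and le: "\<forall>y\<in>V. a \<bullet> y \<le> b"
    and eq: "a \<bullet> u = b" "a \<bullet> v = b" and only: "\<forall>y\<in>V. a \<bullet> y = b \<longrightarrow> y = u \<or> y = v"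
  shows "convex hull {u, v} face_of convex hull V"
proof -
  let ?H = "convex hull V \<inter> {y. a \<bullet> y = b}"
  have "convex hull V \<subseteq> {y. a \<bullet> y \<le> b}"
    by (rule hull_minimal) (use le convex_halfspace_le in auto)
  then have face: "?H face_of convex hull V"
    by (intro face_of_Int_supporting_hyperplane_le) auto
  obtain S' where S': "S' \<subseteq> V" "?H = convex hull S'"
    using face_of_convex_hull_subset[OF finite_imp_compact[OF fin] face] by blast
  have "S' \<subseteq> ?H" unfolding S'(2) by (rule hull_subset)
  then have "S' \<subseteq> {u, v}" using S'(1) only by auto
  then have "?H \<subseteq> convex hull {u, v}" using S'(2) hull_mono by metis
  moreover have "convex hull {u, v} \<subseteq> ?H"
  proof (rule hull_minimal)
    show "{u, v} \<subseteq> ?H" using uv eq hull_subset[of V convex] by auto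
    show "convex ?H" using face face_of_imp_convex by blast
  qed
  ultimately have "?H = convex hull {u, v}" by blast
  then show ?thesis using face by simp
qed

definition dags :: "'n set set \<Rightarrow> ('n \<times> 'n) set set" where
  "dags G = {D. is_dag D \<and> skeleton D = G}"

lemma CIM_eq: "CIM G = convex hull (char_imset ` dags G)"
  unfolding CIM_def dags_def by (simp add: image_def Setcompr_eq_image) (metis (no_types, lifting))

lemma finite_dags: "finite (dags (G :: ('n::finite) set set))"
  by (rule finite_subset[of _ UNIV]) auto

lemma key_face:
  fixes G :: "('n::finite) set set"
  assumes T: "is_tree G" and D1: "D1 \<in> dags G" and D2: "D2 \<in> dags G"
    and H: "\<forall>E\<in>dags G. (\<forall>x. lab E x = lab D1 x \<or> lab E x = lab D2 x) \<longrightarrow>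
              char_imset E = char_imset D1 \<or> char_imset E = char_imset D2"
  shows "convex hull {char_imset D1, char_imset D2} face_of CIM G"
proof -
  define F where "F = (\<lambda>x l. if l = lab D1 x \<or> l = lab D2 x then (1::real) else 0)"
  define a where "a = fvec G F"
  define b where "b = real (card (UNIV :: 'n set)) - (\<Sum>x\<in>UNIV. F x {})"
  have val: "a \<bullet> char_imset E = (\<Sum>x\<in>UNIV. F x (lab E x)) - (\<Sum>x\<in>UNIV. F x {})"
    if "E \<in> dags G" for E
    using that fvec_inner[OF T, of E F] by (simp add: a_def dags_def sum_subtractf)
  have le: "(\<Sum>x\<in>UNIV. F x (lab E x)) \<le> real (card (UNIV :: 'n set))" for E
  proof -
    have "(\<Sum>x\<in>UNIV. F x (lab E x)) \<le> (\<Sum>x\<in>(UNIV::'n set). 1)"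
      by (rule sum_mono) (simp add: F_def)
    then show ?thesis by simp
  qed
  have eqv: "(\<Sum>x\<in>UNIV. F x (lab E x)) = real (card (UNIV :: 'n set)) \<longleftrightarrow>
             (\<forall>x. lab E x = lab D1 x \<or> lab E x = lab D2 x)" for E
  proof -
    have "(\<Sum>x\<in>UNIV. F x (lab E x)) = real (card (UNIV :: 'n set)) \<longleftrightarrow>
          (\<Sum>x\<in>UNIV. 1 - F x (lab E x)) = 0"
    proof -
      have s: "(\<Sum>x\<in>UNIV. 1 - F x (lab E x)) = real (card (UNIV :: 'n set)) - (\<Sum>x\<in>UNIV. F x (lab E x))"
        by (simp add: sum_subtractf)
      show ?thesis unfolding s by linarith
    qed
    also have "\<dots> \<longleftrightarrow> (\<forall>x. 1 - F x (lab E x) = 0)"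
      by (subst sum_nonneg_eq_0_iff) (auto simp: F_def)
    also have "\<dots> \<longleftrightarrow> (\<forall>x. lab E x = lab D1 x \<or> lab E x = lab D2 x)"
      by (auto simp: F_def)
    finally show ?thesis .
  qed
  show ?thesis unfolding CIM_eq
  proof (rule face_pair[where a=a and b=b])
    show "finite (char_imset ` dags G)" using finite_dags by blast
    show "char_imset D1 \<in> char_imset ` dags G" "char_imset D2 \<in> char_imset ` dags G"
      using D1 D2 by auto
    show "\<forall>y\<in>char_imset ` dags G. a \<bullet> y \<le> b"
      using val le by (auto simp: b_def)
    show "a \<bullet> char_imset D1 = b" "a \<bullet> char_imset D2 = b"
      using val[OF D1] val[OF D2] eqv[of D1] eqv[of D2] by (auto simp: b_def)
    show "\<forall>y\<in>char_imset ` dags G. a \<bullet> y = b \<longrightarrow> y = char_imset D1 \<or> y = char_imset D2"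
    proof
      fix y assume "y \<in> char_imset ` dags G"
      then obtain E where E: "E \<in> dags G" "y = char_imset E" by blast
      show "a \<bullet> y = b \<longrightarrow> y = char_imset D1 \<or> y = char_imset D2"
        using val[OF E(1)] eqv[of E] H E by (auto simp: b_def)
    qed
  qed
qed

lemma vertex_ext:
  fixes G :: "('n::finite) set set"
  assumes T: "is_tree G" and D: "D \<in> dags G"
  shows "char_imset D extreme_point_of CIM G"
proof -
  have "convex hull {char_imset D, char_imset D} face_of CIM G"
  proof (rule key_face[OF T D D], intro ballI impI)
    fix E assume E: "E \<in> dags G" "\<forall>x. lab E x = lab D x \<or> lab E x = lab D x"
    then have "lab E = lab D" by auto
    then show "char_imset E = char_imset D \<or> char_imset E = char_imset D"
      using lab_char[of E D] E D by (auto simp: dags_def)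
  qed
  then show ?thesis by (simp add: face_of_singleton)
qed

lemma walk_cons:
  assumes "poly_edge P u w" "poly_walk P w v k"
  shows "poly_walk P u v (Suc k)"
proof -
  obtain xs where xs: "length xs = Suc k" "hd xs = w" "last xs = v" "\<forall>i<k. poly_edge P (xs ! i) (xs ! Suc i)"
    using assms(2) by (auto simp: poly_walk_def)
  have "xs \<noteq> []" using xs by auto
  show ?thesis unfolding poly_walk_def
  proof (intro exI[of _ "u # xs"] conjI allI impI)
    show "length (u # xs) = Suc (Suc k)" using xs by simp
    show "hd (u # xs) = u" by simp
    show "last (u # xs) = v" using xs \<open>xs \<noteq> []\<close> by simp
    fix i assume "i < Suc k"
    then show "poly_edge P ((u # xs) ! i) ((u # xs) ! Suc i)"
      using xs assms(1) \<open>xs \<noteq> []\<close> by (cases i) (auto simp: hd_conv_nth)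
  qed
qed

lemma lab_char_dags:
  assumes "D \<in> dags G" "E \<in> dags G" "lab D = lab E"
  shows "char_imset D = char_imset E"
  using lab_char[of D E] assms by (auto simp: dags_def)

lemma walk_exists:
  fixes G :: "('n::finite) set set"
  assumes T: "is_tree G"
  shows "D1 \<in> dags G \<Longrightarrow> D2 \<in> dags G \<Longrightarrow>
    \<exists>k \<le> card {x. lab D1 x \<noteq> lab D2 x}. poly_walk (CIM G) (char_imset D1) (char_imset D2) k"
proof (induction "card {x. lab D1 x \<noteq> lab D2 x}" arbitrary: D1 rule: less_induct)
  case less
  note D1 = less.prems(1) and D2 = less.prems(2)
  show ?case
  proof (cases "char_imset D1 = char_imset D2")
    case True
    have "poly_walk (CIM G) (char_imset D1) (char_imset D2) 0"
      unfolding poly_walk_def using True by (intro exI[of _ "[char_imset D1]"]) auto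
    then show ?thesis by blast
  next
    case False
    define Cand where "Cand = {D \<in> dags G. (\<forall>x. lab D x = lab D1 x \<or> lab D x = lab D2 x) \<and> char_imset D \<noteq> char_imset D1}"
    define mu where "mu = (\<lambda>D. card {x. lab D x \<noteq> lab D1 x})"
    have "D2 \<in> Cand" using D2 False by (auto simp: Cand_def)
    then obtain D' where D': "D' \<in> Cand" and minD: "\<And>E. E \<in> Cand \<Longrightarrow> mu D' \<le> mu E"
      using ex_has_least_nat[of "\<lambda>D. D \<in> Cand" D2 mu] by blast
    have D'd: "D' \<in> dags G" and D'b: "\<forall>x. lab D' x = lab D1 x \<or> lab D' x = lab D2 x"
      and D'n: "char_imset D' \<noteq> char_imset D1" using D' by (auto simp: Cand_def)
    have edge: "poly_edge (CIM G) (char_imset D1) (char_imset D')"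
      unfolding poly_edge_def poly_vertices_def
    proof (intro conjI CollectI)
      show "char_imset D1 extreme_point_of CIM G" by (rule vertex_ext[OF T D1])
      show "char_imset D' extreme_point_of CIM G" by (rule vertex_ext[OF T D'd])
      show "char_imset D1 \<noteq> char_imset D'" using D'n by simp
      show "convex hull {char_imset D1, char_imset D'} face_of CIM G"
      proof (rule key_face[OF T D1 D'd], intro ballI impI)
        fix E assume E: "E \<in> dags G" and Eb: "\<forall>x. lab E x = lab D1 x \<or> lab E x = lab D' x"
        show "char_imset E = char_imset D1 \<or> char_imset E = char_imset D'"
        proof (cases "char_imset E = char_imset D1")
          case True then show ?thesis by simp
        next
          case False
          have "\<forall>x. lab E x = lab D1 x \<or> lab E x = lab D2 x"
          proof
            fix x show "lab E x = lab D1 x \<or> lab E x = lab D2 x"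
              using Eb[rule_format, of x] D'b[rule_format, of x] by auto
          qed
          then have "E \<in> Cand" using E False by (simp add: Cand_def)
          then have m: "mu D' \<le> mu E" by (rule minD)
          have sub: "{x. lab E x \<noteq> lab D1 x} \<subseteq> {x. lab D' x \<noteq> lab D1 x}" using Eb by auto
          have "{x. lab E x \<noteq> lab D1 x} = {x. lab D' x \<noteq> lab D1 x}"
            using card_subset_eq[OF _ sub] m card_mono[OF _ sub] by (simp add: mu_def)
          then have "lab E = lab D'" using Eb by (auto simp: fun_eq_iff)
          then show ?thesis using lab_char_dags[OF E D'd] by simp
        qed
      qed
    qed
    have ss: "{x. lab D' x \<noteq> lab D2 x} \<subset> {x. lab D1 x \<noteq> lab D2 x}"
    proof
      show "{x. lab D' x \<noteq> lab D2 x} \<subseteq> {x. lab D1 x \<noteq> lab D2 x}" using D'b by auto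
      have "lab D' \<noteq> lab D1" using D'n lab_char_dags[OF D'd D1] by auto
      then obtain x where "lab D' x \<noteq> lab D1 x" by (auto simp: fun_eq_iff)
      then have "lab D' x = lab D2 x" "lab D1 x \<noteq> lab D2 x" using D'b by metis+
      then show "{x. lab D' x \<noteq> lab D2 x} \<noteq> {x. lab D1 x \<noteq> lab D2 x}" by blast
    qed
    then have lt: "card {x. lab D' x \<noteq> lab D2 x} < card {x. lab D1 x \<noteq> lab D2 x}"
      by (intro psubset_card_mono) auto
    obtain k where k: "k \<le> card {x. lab D' x \<noteq> lab D2 x}" "poly_walk (CIM G) (char_imset D') (char_imset D2) k"
      using less.hyps[OF lt D'd D2] by blast
    have "poly_walk (CIM G) (char_imset D1) (char_imset D2) (Suc k)"
      by (rule walk_cons[OF edge k(2)])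
    moreover have "Suc k \<le> card {x. lab D1 x \<noteq> lab D2 x}" using k(1) lt by simp
    ultimately show ?thesis by blast
  qed
qed

lemma diff_internal:
  fixes G :: "('n::finite) set set"
  assumes T: "is_tree G" and D1: "D1 \<in> dags G" and D2: "D2 \<in> dags G"
  shows "card {x. lab D1 x \<noteq> lab D2 x} \<le> card (internal_vertices G)"
proof (rule card_mono)
  show "finite (internal_vertices G)" by simp
  show "{x. lab D1 x \<noteq> lab D2 x} \<subseteq> internal_vertices G"
  proof
    fix x assume "x \<in> {x. lab D1 x \<noteq> lab D2 x}"
    then obtain D where D: "D \<in> dags G" "2 \<le> card (parents D x)"
      using D1 D2 by (auto simp: lab_def split: if_splits)
    have S: "skeleton D = G" using D by (simp add: dags_def)
    have "card (parents D x) \<le> card {e \<in> G. x \<in> e}"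
    proof (rule card_inj_on_le[where f = "\<lambda>j. {x, j}"])
      show "inj_on (\<lambda>j. {x, j}) (parents D x)"
        using parents_nbrs[OF S, of x] not_self_nbr[OF T, of x]
        by (auto simp: inj_on_def doubleton_eq_iff)
      show "(\<lambda>j. {x, j}) ` parents D x \<subseteq> {e \<in> G. x \<in> e}"
        using parents_nbrs[OF S, of x] by (auto simp: nbrs_def)
      show "finite {e \<in> G. x \<in> e}" by simp
    qed
    then have "degree G x \<noteq> 1" using D(2) by (simp add: degree_def)
    then show "x \<in> internal_vertices G" by (simp add: internal_vertices_def)
  qed
qed

theorem mainTheorem2:
  fixes G :: "('n::finite) set set"
  assumes "is_tree G"
  shows "poly_diam (CIM G) \<le> enat (card (internal_vertices G))"
  unfolding poly_diam_def
proof (rule Sup_least, clarify)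
  fix u v assume u: "u \<in> poly_vertices (CIM G)" and v: "v \<in> poly_vertices (CIM G)"
  obtain D1 where D1: "D1 \<in> dags G" "u = char_imset D1"
    using u extreme_point_of_convex_hull[of u] by (auto simp: poly_vertices_def CIM_eq)
  obtain D2 where D2: "D2 \<in> dags G" "v = char_imset D2"
    using v extreme_point_of_convex_hull[of v] by (auto simp: poly_vertices_def CIM_eq)
  obtain k where k: "k \<le> card {x. lab D1 x \<noteq> lab D2 x}" "poly_walk (CIM G) u v k"
    using walk_exists[OF assms D1(1) D2(1)] D1 D2 by blast
  have "poly_dist (CIM G) u v = enat (LEAST k. poly_walk (CIM G) u v k)"
    using k(2) by (auto simp: poly_dist_def)
  also have "\<dots> \<le> enat k" using k(2) by (simp add: Least_le)
  also have "\<dots> \<le> enat (card (internal_vertices G))"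
    using k(1) diff_internal[OF assms D1(1) D2(1)] by simp
  finally show "poly_dist (CIM G) u v \<le> enat (card (internal_vertices G))" .
qed

end
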